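(* Let $f^*$ be the norm on $\mathbb{R}^2$ whose unit ball is $\{(x_1,x_2): |x_1+x_2|\le4,\ |x_1-x_2|\le1\}$. Then there exists $\alpha=(\alpha_1,\alpha_2)\in\mathbb{R}^2\setminus\mathbb{Q}^2$ such that the sequence of all $f^*$-best simultaneous approximations $(p_\nu,a_\nu)$ to $\alpha$ has constant signature sequence: $\operatorname{sign}\xi_\nu=(+,+)$ for every $\nu$, where $\xi_\nu=\alpha p_\nu-a_\nu$.
   Context: For a vector $\eta=(\eta_1,\eta_2)$, $\operatorname{sign}\eta=(\operatorname{sign}\eta_1,\operatorname{sign}\eta_2)$. For a norm $f$ on $\mathbb{R}^n$ and $\alpha\in\mathbb{R}^n$, an $f$-best simultaneous approximation is an integer point $\tau=(p,a_1,\dots,a_n)\in\mathbb{Z}^{n+1}$ with $p\ge1$ such that $f(\alpha q-b)>f(\alpha p-a)$ for all $(q,b)\in\mathbb{Z}^{n+1}$ with $1\le q\le p-1$ and for all $(p,b)$ with $b\ne a$. They form a sequence $(p_\nu,a_\nu)$ with $p_1<p_2<\dots$. *)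

theory Defs
  imports Complex_Main
begin

definition fstar_ball :: "(real \<times> real) set" where
  "fstar_ball = {(x1, x2). \<bar>x1 + x2\<bar> \<le> 4 \<and> \<bar>x1 - x2\<bar> \<le> 1}"

definition minkowski_gauge :: "(real \<times> real) set \<Rightarrow> real \<times> real \<Rightarrow> real" where
  "minkowski_gauge B x = Inf {t. t > 0 \<and> (fst x / t, snd x / t) \<in> B}"

definition fstar :: "real \<times> real \<Rightarrow> real" where
  "fstar = minkowski_gauge fstar_ball"

definition approx_vec :: "real \<times> real \<Rightarrow> int \<Rightarrow> int \<times> int \<Rightarrow> real \<times> real" where
  "approx_vec \<alpha> q b = (fst \<alpha> * of_int q - of_int (fst b), snd \<alpha> * of_int q - of_int (snd b))"

definition best_sim_approx ::
  "(real \<times> real \<Rightarrow> real) \<Rightarrow> real \<times> real \<Rightarrow> int \<Rightarrow> int \<times> int \<Rightarrow> bool" where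
  "best_sim_approx f \<alpha> p a \<longleftrightarrow> p \<ge> 1 \<and>
     (\<forall>q b. 1 \<le> q \<and> q \<le> p - 1 \<longrightarrow> f (approx_vec \<alpha> q b) > f (approx_vec \<alpha> p a)) \<and>
     (\<forall>b. b \<noteq> a \<longrightarrow> f (approx_vec \<alpha> p b) > f (approx_vec \<alpha> p a))"

end

theory Submission
  imports Defs
begin

fun ee :: "nat \<Rightarrow> nat" where
  "ee 0 = 0" | "ee (Suc k) = 4 * ee k + 6"

definition QQ :: "nat \<Rightarrow> int" where "QQ k = 2 ^ ee k"
definition NN :: "nat \<Rightarrow> int" where "NN k = 64 * QQ k ^ 3"
definition d1 :: "nat \<Rightarrow> int" where "d1 k = (if even k then 2 else 1)"
definition d2 :: "nat \<Rightarrow> int" where "d2 k = (if even k then 1 else 2)"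

fun AA :: "(nat \<Rightarrow> int) \<Rightarrow> nat \<Rightarrow> int" where
  "AA d 0 = 0" | "AA d (Suc k) = NN k * AA d k + d k"
abbreviation "A1 \<equiv> AA d1"
abbreviation "A2 \<equiv> AA d2"

lemma QQ_pos: "QQ k \<ge> 1" unfolding QQ_def by simp

lemma QQ_Suc: "QQ (Suc k) = NN k * QQ k"
proof -
  have n: "4 * ee k + 6 = ee k + ee k + ee k + ee k + 6" by simp
  have "(2::int)^(4 * ee k + 6) = 2^(ee k + ee k + ee k + ee k) * 2^6"
    unfolding n by (simp only: power_add)
  also have "\<dots> = 64 * (2^ee k)^3 * 2^ee k" by (simp add: power_add power3_eq_cube)
  finally show ?thesis unfolding QQ_def NN_def by simp
qed

lemma NN_ge: "NN k \<ge> 64 * QQ k"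
proof -
  have "QQ k \<le> QQ k ^ 3" using QQ_pos[of k]
    by (metis one_le_power power_increasing_iff less_one not_less numeral_le_iff power_one_right semiring_norm(70) zero_less_one_class.zero_le_one power_increasing le_numeral_extra(4) le_less_linear zero_neq_numeral) 
  then show ?thesis unfolding NN_def by simp
qed

lemma NN_pos: "NN k \<ge> 64" using NN_ge[of k] QQ_pos[of k] by simp

lemma NN_Suc_ge: "NN (Suc k) \<ge> 64 * NN k * QQ k"
  using NN_ge[of "Suc k"] QQ_Suc[of k] by simp

lemma QQ_Suc_ge: "QQ (Suc k) \<ge> 2 * QQ k"
  using QQ_Suc[of k] NN_pos[of k] QQ_pos[of k] by (simp add: mult_right_mono)

lemma QQ_ge_pow: "QQ (i + k) \<ge> 2 ^ i * QQ k"
proof (induction i)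
  case 0 then show ?case by simp
next
  case (Suc i)
  have "QQ (Suc i + k) \<ge> 2 * QQ (i + k)" using QQ_Suc_ge[of "i+k"] by simp
  with Suc show ?case by simp
qed

lemma odd_cross: "odd (A1 (Suc k) * d2 (Suc k) - A2 (Suc k) * d1 (Suc k))"
proof -
  have e: "even (NN k)" unfolding NN_def by simp
  have "A1 (Suc k) * d2 (Suc k) - A2 (Suc k) * d1 (Suc k)
     = NN k * (A1 k * d2 (Suc k) - A2 k * d1 (Suc k)) + (d1 k * d2 (Suc k) - d2 k * d1 (Suc k))"
    by (simp add: algebra_simps)
  moreover have "d1 k * d2 (Suc k) - d2 k * d1 (Suc k) = 3 \<or> d1 k * d2 (Suc k) - d2 k * d1 (Suc k) = -3"
    unfolding d1_def d2_def by auto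
  moreover obtain m where "NN k = 2 * m" using e by blast
  ultimately show ?thesis
  proof -
    fix X Y c m :: int
    assume "X = NN k * Y + c" "c = 3 \<or> c = -3" "NN k = 2 * m"
    then have "X = 2 * (m * Y) + c" "c = 3 \<or> c = -3" by auto
    then show "odd X" by auto
  qed
qed

lemma QQ_dvd:
  assumes "QQ k dvd q * (A1 k * d2 k - A2 k * d1 k)"
  shows "QQ k dvd q"
proof (cases k)
  case 0 then show ?thesis unfolding QQ_def by simp
next
  case (Suc m)
  have "coprime (QQ k) (A1 k * d2 k - A2 k * d1 k)"
    unfolding QQ_def using odd_cross[of m] Suc
    by (simp add: coprime_power_left_iff)
  then show ?thesis using assms by (simp add: coprime_dvd_mult_left_iff)
qed

definition ser :: "(nat \<Rightarrow> int) \<Rightarrow> nat \<Rightarrow> real" where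
  "ser d i = real_of_int (d i) / real_of_int (QQ (Suc i))"

definition lim0 :: "(nat \<Rightarrow> int) \<Rightarrow> real" where "lim0 d = suminf (ser d)"

definition ee0 :: "(nat \<Rightarrow> int) \<Rightarrow> nat \<Rightarrow> real" where
  "ee0 d k = real_of_int (QQ k) * lim0 d - real_of_int (AA d k)"

lemma d_bounds: "1 \<le> d1 k" "d1 k \<le> 2" "1 \<le> d2 k" "d2 k \<le> 2"
  unfolding d1_def d2_def by auto

lemma ser_pos: assumes "\<And>i. 1 \<le> d i" shows "0 < ser d i"
  unfolding ser_def using assms[of i] QQ_pos[of "Suc i"] by simp

lemma ser_le:
  assumes "\<And>i. d i \<le> 2"
  shows "ser d (i + k) \<le> 2 / real_of_int (QQ (Suc k)) * (1/2)^i"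
proof -
  have q: "real_of_int (QQ (Suc (i + k))) \<ge> 2^i * real_of_int (QQ (Suc k))"
  proof -
    have "real_of_int (2^i * QQ (Suc k)) \<le> real_of_int (QQ (i + Suc k))"
      using QQ_ge_pow[of i "Suc k"] by (simp only: of_int_le_iff)
    then show ?thesis by simp
  qed
  have qp: "real_of_int (QQ (Suc k)) > 0" using QQ_pos[of "Suc k"] by simp
  have "ser d (i + k) \<le> 2 / real_of_int (QQ (Suc (i + k)))"
    unfolding ser_def using assms[of "i+k"] QQ_pos[of "Suc (i+k)"]
    by (simp add: divide_right_mono)
  also have "\<dots> \<le> 2 / (2^i * real_of_int (QQ (Suc k)))"
    using q qp QQ_pos[of "Suc (i+k)"] by (intro divide_left_mono) (auto intro!: mult_pos_pos)
  also have "\<dots> = 2 / real_of_int (QQ (Suc k)) * (1/2)^i"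
    by (simp add: power_one_over field_simps)
  finally show ?thesis .
qed

lemma ser_summable:
  assumes "\<And>i. 1 \<le> d i" "\<And>i. d i \<le> 2"
  shows "summable (\<lambda>i. ser d (i + k))"
proof (rule summable_comparison_test')
  show "summable (\<lambda>i. 2 / real_of_int (QQ (Suc k)) * (1/2::real)^i)"
    by (intro summable_mult summable_geometric) simp
  show "norm (ser d (i + k)) \<le> 2 / real_of_int (QQ (Suc k)) * (1/2)^i" if "i \<ge> 0" for i
    using ser_le[of d i k] ser_pos[of d "i+k"] assms by simp
qed

lemma AA_sum: "real_of_int (AA d k) = real_of_int (QQ k) * (\<Sum>i<k. ser d i)"
proof (induction k)
  case 0 then show ?case by simp
next
  case (Suc k)
  have qp: "real_of_int (QQ (Suc k)) > 0" using QQ_pos[of "Suc k"] by simp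
  have "real_of_int (AA d (Suc k)) = real_of_int (NN k) * real_of_int (AA d k) + real_of_int (d k)" by simp
  also have "\<dots> = real_of_int (QQ (Suc k)) * (\<Sum>i<k. ser d i) + real_of_int (d k)"
    unfolding Suc QQ_Suc by simp
  also have "\<dots> = real_of_int (QQ (Suc k)) * (\<Sum>i<Suc k. ser d i)"
    using qp by (simp add: ser_def field_simps)
  finally show ?case .
qed

lemma ee0_sum:
  assumes "\<And>i. 1 \<le> d i" "\<And>i. d i \<le> 2"
  shows "ee0 d k = real_of_int (QQ k) * (\<Sum>i. ser d (i + k))"
proof -
  have "summable (ser d)" using ser_summable[of d 0] assms by simp
  then have "lim0 d = (\<Sum>i. ser d (i + k)) + (\<Sum>i<k. ser d i)"
    unfolding lim0_def by (rule suminf_split_initial_segment)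
  then show ?thesis unfolding ee0_def AA_sum by (simp add: algebra_simps)
qed

lemma ee0_pos:
  assumes "\<And>i. 1 \<le> d i" "\<And>i. d i \<le> 2"
  shows "0 < ee0 d k"
proof -
  have "0 < (\<Sum>i. ser d (i + k))"
    using suminf_pos[OF ser_summable[of d k]] ser_pos assms by auto
  then show ?thesis using ee0_sum[OF assms] QQ_pos[of k] by simp
qed

lemma ee0_le:
  assumes "\<And>i. 1 \<le> d i" "\<And>i. d i \<le> 2"
  shows "ee0 d k * real_of_int (NN k) \<le> 4"
proof -
  have qp: "real_of_int (QQ (Suc k)) > 0" using QQ_pos[of "Suc k"] by simp
  have "(\<Sum>i. ser d (i + k)) \<le> (\<Sum>i. 2 / real_of_int (QQ (Suc k)) * (1/2::real)^i)"
    using ser_summable[OF assms, where k=k] ser_le[where d=d and k=k] assms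
    by (intro suminf_le) (auto intro!: summable_mult summable_geometric)
  also have "\<dots> = 2 / real_of_int (QQ (Suc k)) * (\<Sum>i. (1/2::real)^i)"
    by (intro suminf_mult summable_geometric) simp
  also have "\<dots> = 4 / real_of_int (QQ (Suc k))"
    by (simp add: suminf_geometric)
  finally have s: "(\<Sum>i. ser d (i + k)) \<le> 4 / real_of_int (QQ (Suc k))" .
  have "ee0 d k * real_of_int (NN k) = real_of_int (QQ (Suc k)) * (\<Sum>i. ser d (i + k))"
    unfolding ee0_sum[OF assms] QQ_Suc by simp
  also have "\<dots> \<le> real_of_int (QQ (Suc k)) * (4 / real_of_int (QQ (Suc k)))"
    using s qp by (intro mult_left_mono) auto
  also have "\<dots> = 4" using qp by simp
  finally show ?thesis .
qed

lemma ee0_rec: "real_of_int (NN k) * ee0 d k = real_of_int (d k) + ee0 d (Suc k)"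
  unfolding ee0_def QQ_Suc by (simp add: algebra_simps)

definition gg :: "real \<Rightarrow> real \<Rightarrow> real" where
  "gg a b = max (\<bar>a + b\<bar> / 4) \<bar>a - b\<bar>"

lemma gg_scale: "c \<ge> 0 \<Longrightarrow> gg (c * a) (c * b) = c * gg a b"
proof -
  assume c: "c \<ge> 0"
  have "\<bar>c * a + c * b\<bar> / 4 = c * (\<bar>a + b\<bar> / 4)"
    using c by (simp add: distrib_left[symmetric] abs_mult)
  moreover have "\<bar>c * a - c * b\<bar> = c * \<bar>a - b\<bar>"
    using c by (simp add: right_diff_distrib[symmetric] abs_mult)
  ultimately show ?thesis unfolding gg_def using c by (simp add: max_mult_distrib_left)
qed

lemma gg_ge: "\<bar>a - b\<bar> \<le> gg a b" "\<bar>a + b\<bar> \<le> 4 * gg a b"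
proof -
  show "\<bar>a - b\<bar> \<le> gg a b" unfolding gg_def by simp
  show "\<bar>a + b\<bar> \<le> 4 * gg a b" unfolding gg_def by (auto simp: max_def)
qed

lemma gg_nonneg: "0 \<le> gg a b" unfolding gg_def by auto

lemma ee_small: "ee0 d1 k \<le> 1/16" "ee0 d2 k \<le> 1/16" "0 < ee0 d1 k" "0 < ee0 d2 k"
proof -
  have N: "real_of_int (NN k) \<ge> 64" using NN_pos[of k] by linarith
  have "ee0 d1 k * real_of_int (NN k) \<le> 4" "ee0 d2 k * real_of_int (NN k) \<le> 4"
       "0 < ee0 d1 k" "0 < ee0 d2 k"
    using ee0_le[of d1 k] ee0_le[of d2 k] ee0_pos[of d1 k] ee0_pos[of d2 k] d_bounds by auto
  moreover have "ee0 d1 k * 64 \<le> ee0 d1 k * real_of_int (NN k)"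
    "ee0 d2 k * 64 \<le> ee0 d2 k * real_of_int (NN k)"
    using N calculation by (auto intro!: mult_left_mono)
  ultimately show "ee0 d1 k \<le> 1/16" "ee0 d2 k \<le> 1/16" "0 < ee0 d1 k" "0 < ee0 d2 k" by linarith+
qed

lemma sign_fact: "real_of_int (d1 k - d2 k) * (ee0 d1 k - ee0 d2 k) > 0"
proof -
  have N: "real_of_int (NN k) > 0" using NN_pos[of k] by linarith
  have r: "real_of_int (NN k) * (ee0 d1 k - ee0 d2 k) = real_of_int (d1 k - d2 k) + (ee0 d1 (Suc k) - ee0 d2 (Suc k))"
    using ee0_rec[of k d1] ee0_rec[of k d2] by (simp add: algebra_simps)
  have s: "ee0 d1 (Suc k) \<le> 1/16" "ee0 d2 (Suc k) \<le> 1/16" "0 < ee0 d1 (Suc k)" "0 < ee0 d2 (Suc k)"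
    using ee_small by auto
  have "real_of_int (d1 k - d2 k) * (real_of_int (NN k) * (ee0 d1 k - ee0 d2 k)) > 0"
    unfolding r using s by (cases "even k") (auto simp: d1_def d2_def algebra_simps)
  then have "real_of_int (NN k) * (real_of_int (d1 k - d2 k) * (ee0 d1 k - ee0 d2 k)) > 0"
    by (simp add: algebra_simps)
  then show ?thesis using N by (simp add: zero_less_mult_iff)
qed

lemma sign_next: "real_of_int (d1 k - d2 k) * (ee0 d1 (Suc k) - ee0 d2 (Suc k)) < 0"
proof -
  have "d1 (Suc k) - d2 (Suc k) = - (d1 k - d2 k)" unfolding d1_def d2_def by auto
  then have "0 < (real_of_int (d2 k) - real_of_int (d1 k)) * (ee0 d1 (Suc k) - ee0 d2 (Suc k))"
    using sign_fact[of "Suc k"] by simp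
  moreover have "(real_of_int (d1 k) - real_of_int (d2 k)) * (ee0 d1 (Suc k) - ee0 d2 (Suc k))
     = - ((real_of_int (d2 k) - real_of_int (d1 k)) * (ee0 d1 (Suc k) - ee0 d2 (Suc k)))"
    by (simp add: algebra_simps)
  ultimately show ?thesis by simp
qed

lemma cross_le:
  "\<bar>z1 * real_of_int (d2 k) - z2 * real_of_int (d1 k)\<bar> \<le> 4 * gg z1 z2"
proof -
  have "\<bar>z1 - z2\<bar> \<le> gg z1 z2" "\<bar>z1 + z2\<bar> \<le> 4 * gg z1 z2" by (rule gg_ge)+
  then show ?thesis by (cases "even k") (auto simp: d1_def d2_def abs_le_iff)
qed

lemma ineq0:
  fixes t f1 f2 P1 P2 D1 D2 :: real
  assumes D: "(D1 = 2 \<and> D2 = 1) \<or> (D1 = 1 \<and> D2 = 2)"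
    and t: "t = -1 \<or> t \<le> -2"
    and f: "0 < f1" "f1 \<le> 1/16" "0 < f2" "f2 \<le> 1/16"
    and P: "0 < P1" "P1 \<le> 1/16" "0 < P2" "P2 \<le> 1/16"
    and s: "(D1 - D2) * (f1 - f2) < 0" "(D1 - D2) * (P1 - P2) < 0"
  shows "gg (D1 + f1) (D2 + f2) \<le> gg (t * D1 + P1) (t * D2 + P2)"
proof -
  have R: "\<bar>(t * D1 + P1) - (t * D2 + P2)\<bar> \<le> gg (t * D1 + P1) (t * D2 + P2)"
    unfolding gg_def by simp
  have L: "\<bar>(D1 + f1) + (D2 + f2)\<bar> / 4 \<le> \<bar>(t * D1 + P1) - (t * D2 + P2)\<bar> \<and>
        \<bar>(D1 + f1) - (D2 + f2)\<bar> \<le> \<bar>(t * D1 + P1) - (t * D2 + P2)\<bar>"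
    using D t f P s by (auto simp: abs_if)
  show ?thesis using L R unfolding gg_def by (simp add: max_def)
qed


lemma gg_le4:
  assumes "0 < a" "0 < b" "a \<le> 4" "b \<le> 4"
  shows "gg a b \<le> 4"
  using assms unfolding gg_def by (auto simp: abs_if)

lemma main:
  fixes q b1 b2 :: int
  assumes qlo: "QQ k < q" and qhi: "q \<le> QQ (Suc k)"
    and bad: "lim0 d1 * q - b1 \<le> 0 \<or> lim0 d2 * q - b2 \<le> 0"
  shows "gg (ee0 d1 k) (ee0 d2 k) \<le> gg (lim0 d1 * q - b1) (lim0 d2 * q - b2)"
proof -
  define Q where "Q = real_of_int (QQ k)"
  define N where "N = real_of_int (NN k)"
  define N' where "N' = real_of_int (NN (Suc k))"
  define e1 where "e1 = ee0 d1 k"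
  define e2 where "e2 = ee0 d2 k"
  define f1 where "f1 = ee0 d1 (Suc k)"
  define f2 where "f2 = ee0 d2 (Suc k)"
  define x1 where "x1 = lim0 d1 * q - b1"
  define x2 where "x2 = lim0 d2 * q - b2"
  define D1 where "D1 = d1 k"
  define D2 where "D2 = d2 k"
  define G where "G = gg e1 e2"
  define H where "H = gg x1 x2"
  have Q1: "Q \<ge> 1" unfolding Q_def using QQ_pos[of k] by simp
  have N64: "N \<ge> 64 * Q" unfolding N_def Q_def using NN_ge[of k] by linarith
  have N64': "N \<ge> 64" using N64 Q1 by linarith
  have N'ge: "N' \<ge> 64 * N * Q"
  proof -
    have "real_of_int (64 * NN k * QQ k) \<le> real_of_int (NN (Suc k))"
      using NN_Suc_ge[of k] by (simp only: of_int_le_iff)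
    then show ?thesis unfolding N'_def N_def Q_def by simp
  qed
  have Qx1: "Q * lim0 d1 = e1 + A1 k" unfolding Q_def e1_def ee0_def by simp
  have Qx2: "Q * lim0 d2 = e2 + A2 k" unfolding Q_def e2_def ee0_def by simp
  have rec1: "N * e1 = D1 + f1" unfolding N_def e1_def f1_def D1_def by (rule ee0_rec)
  have rec2: "N * e2 = D2 + f2" unfolding N_def e2_def f2_def D2_def by (rule ee0_rec)
  have fb: "f1 * N' \<le> 4" "f2 * N' \<le> 4" "0 < f1" "0 < f2" "f1 \<le> 1/16" "f2 \<le> 1/16"
    unfolding f1_def f2_def N'_def using ee0_le[of d1 "Suc k"] ee0_le[of d2 "Suc k"] d_bounds ee_small
    by auto
  have eb: "e1 * N \<le> 4" "e2 * N \<le> 4" "0 < e1" "0 < e2"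
    unfolding e1_def e2_def N_def using ee0_le[of d1 k] ee0_le[of d2 k] d_bounds ee_small
    by auto
  have fNQ: "f1 * (N * Q) \<le> 1/16" "f2 * (N * Q) \<le> 1/16"
  proof -
    have a1: "f1 * (64 * N * Q) \<le> f1 * N'" by (rule mult_left_mono[OF N'ge]) (use fb in auto)
    have a2: "f2 * (64 * N * Q) \<le> f2 * N'" by (rule mult_left_mono[OF N'ge]) (use fb in auto)
    have b1: "f1 * (64 * N * Q) = 64 * (f1 * (N * Q))" "f2 * (64 * N * Q) = 64 * (f2 * (N * Q))"
      by (simp_all add: algebra_simps)
    show "f1 * (N * Q) \<le> 1/16" "f2 * (N * Q) \<le> 1/16" using a1 a2 b1 fb(1,2) by linarith+
  qed
  have fN: "f1 * N \<le> 1/16" "f2 * N \<le> 1/16"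
  proof -
    have "f1 * N \<le> f1 * (N * Q)" "f2 * N \<le> f2 * (N * Q)"
      using fb Q1 N64' by (auto intro!: mult_left_mono simp: mult_le_cancel_left1)
    then show "f1 * N \<le> 1/16" "f2 * N \<le> 1/16" using fNQ by auto
  qed
  have GN: "N * G \<le> 4"
  proof -
    have "gg (N * e1) (N * e2) \<le> 4" using eb N64' by (intro gg_le4) (auto simp: mult.commute)
    then show ?thesis unfolding G_def using N64' by (simp add: gg_scale)
  qed
  have G0: "G \<ge> 0" unfolding G_def by (rule gg_nonneg)
  have QG: "Q * G \<le> 1/16"
  proof -
    have "64 * Q * G \<le> N * G" using N64 G0 by (intro mult_right_mono) auto
    then show ?thesis using GN by linarith
  qed
  have qNQ: "real_of_int q \<le> N * Q" unfolding N_def Q_def using qhi QQ_Suc[of k]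
    by (metis of_int_le_iff of_int_mult)
  have q0: "real_of_int q > 0" using qlo QQ_pos[of k] by simp
  define c where "c = (q * A1 k - QQ k * b1) * D2 - (q * A2 k - QQ k * b2) * D1"
  have Dcases: "(D1 = 2 \<and> D2 = 1) \<or> (D1 = 1 \<and> D2 = 2)" unfolding D1_def D2_def d1_def d2_def by auto
  show ?thesis
  proof (cases "c = 0")
    case False
    define X where "X = x1 * D2 - x2 * D1"
    have h1: "Q * x1 = q * e1 + (q * A1 k - QQ k * b1)"
    proof -
      have "Q * x1 = q * (Q * lim0 d1) - Q * b1" unfolding x1_def by (simp add: algebra_simps)
      then have "Q * x1 = q * (e1 + A1 k) - Q * b1" unfolding Qx1 .
      then show ?thesis unfolding Q_def by (simp add: algebra_simps)
    qed
    have h2: "Q * x2 = q * e2 + (q * A2 k - QQ k * b2)"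
    proof -
      have "Q * x2 = q * (Q * lim0 d2) - Q * b2" unfolding x2_def by (simp add: algebra_simps)
      then have "Q * x2 = q * (e2 + A2 k) - Q * b2" unfolding Qx2 .
      then show ?thesis unfolding Q_def by (simp add: algebra_simps)
    qed
    have hX: "Q * X = q * (e1 * D2 - e2 * D1) + c"
    proof -
      have "Q * X = (Q * x1) * D2 - (Q * x2) * D1" unfolding X_def by (simp add: algebra_simps)
      also have "\<dots> = q * (e1 * D2 - e2 * D1) + c" unfolding h1 h2 c_def by (simp add: algebra_simps)
      finally show ?thesis .
    qed
    have hE: "N * (e1 * D2 - e2 * D1) = f1 * D2 - f2 * D1"
    proof -
      have "N * (e1 * D2 - e2 * D1) = (N * e1) * D2 - (N * e2) * D1" by (simp add: algebra_simps)
      also have "\<dots> = f1 * D2 - f2 * D1" unfolding rec1 rec2 by (simp add: algebra_simps)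
      finally show ?thesis .
    qed
    have eq: "Q * N * X = c * N + q * (f1 * D2 - f2 * D1)"
    proof -
      have "Q * N * X = N * (Q * X)" by (simp add: algebra_simps)
      also have "\<dots> = c * N + q * (N * (e1 * D2 - e2 * D1))" unfolding hX by (simp add: algebra_simps)
      finally show ?thesis unfolding hE .
    qed
    have fD: "\<bar>f1 * D2 - f2 * D1\<bar> \<le> 2 * f1 + 2 * f2"
      using Dcases fb by (auto simp: abs_if)
    have R: "\<bar>q * (f1 * D2 - f2 * D1)\<bar> \<le> 1/4"
    proof -
      have "\<bar>q * (f1 * D2 - f2 * D1)\<bar> = q * \<bar>f1 * D2 - f2 * D1\<bar>" using q0 by (simp add: abs_mult)
      also have "\<dots> \<le> (N * Q) * (2 * f1 + 2 * f2)"
        using qNQ q0 fD by (intro mult_mono) auto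
      also have "\<dots> = 2 * (f1 * (N * Q)) + 2 * (f2 * (N * Q))" by (simp add: algebra_simps)
      also have "\<dots> \<le> 1/4" using fNQ by linarith
      finally show ?thesis .
    qed
    have c1: "\<bar>real_of_int c\<bar> \<ge> 1" using False by linarith
    have cN: "\<bar>c * N\<bar> \<ge> N"
    proof -
      have "\<bar>c * N\<bar> = \<bar>real_of_int c\<bar> * N" using N64' by (simp add: abs_mult)
      also have "\<dots> \<ge> 1 * N" using c1 N64' by (intro mult_right_mono) auto
      finally show ?thesis by simp
    qed
    have big: "\<bar>Q * N * X\<bar> \<ge> N - 1/4" using eq R cN by linarith
    have XH: "\<bar>X\<bar> \<le> 4 * H" unfolding X_def H_def D1_def D2_def by (rule cross_le)
    have "\<bar>Q * N * X\<bar> = N * (Q * \<bar>X\<bar>)" using Q1 N64' by (simp add: abs_mult algebra_simps)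
    also have "\<dots> \<le> N * (Q * (4 * H))" using XH Q1 N64' by (intro mult_left_mono) auto
    finally have "N * (Q * (4 * H)) \<ge> N - 1/4" using big by linarith
    then have "N * (4 * (Q * H) - 1/2) \<ge> N / 2 - 1/4" by (simp add: algebra_simps)
    then have "N * (4 * (Q * H) - 1/2) > 0" using N64' by linarith
    then have "4 * (Q * H) - 1/2 > 0" using N64' by (simp add: zero_less_mult_iff)
    then have "Q * G \<le> Q * H" using QG by linarith
    then show ?thesis using Q1 unfolding G_def H_def x1_def x2_def e1_def e2_def by simp
  next
    case True
    have "q * (A1 k * D2 - A2 k * D1) = c + QQ k * (b1 * D2 - b2 * D1)"
      unfolding c_def by (simp add: algebra_simps)
    then have "q * (A1 k * D2 - A2 k * D1) = QQ k * (b1 * D2 - b2 * D1)" using True by simp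
    then have "QQ k dvd q * (A1 k * d2 k - A2 k * d1 k)" unfolding D1_def D2_def by simp
    then obtain j where qj: "q = QQ k * j" using QQ_dvd by blast
    have j1: "j \<ge> 1"
    proof (rule ccontr)
      assume "\<not> j \<ge> 1"
      then have "QQ k * j \<le> 0" using QQ_pos[of k] by (simp add: mult_nonneg_nonpos)
      then show False using qj qlo QQ_pos[of k] by simp
    qed
    have jN: "j \<le> NN k"
    proof -
      have "QQ k * j \<le> QQ k * NN k" using qj qhi QQ_Suc[of k] by (simp add: mult.commute)
      then show ?thesis using QQ_pos[of k] by simp
    qed
    define W1 where "W1 = j * A1 k - b1"
    define W2 where "W2 = j * A2 k - b2"
    have "c = QQ k * (W1 * D2 - W2 * D1)" unfolding c_def W1_def W2_def qj by (simp add: algebra_simps)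
    then have WW: "W1 * D2 = W2 * D1" using True QQ_pos[of k] by simp
    obtain n where n1: "W1 = n * D1" and n2: "W2 = n * D2"
      using Dcases WW by auto
    have xx1: "x1 = W1 + j * e1"
    proof -
      have "x1 = j * (Q * lim0 d1) - b1" unfolding x1_def qj Q_def by (simp add: algebra_simps)
      then show ?thesis unfolding Qx1 W1_def by (simp add: algebra_simps)
    qed
    have xx2: "x2 = W2 + j * e2"
    proof -
      have "x2 = j * (Q * lim0 d2) - b2" unfolding x2_def qj Q_def by (simp add: algebra_simps)
      then show ?thesis unfolding Qx2 W2_def by (simp add: algebra_simps)
    qed
    define T where "T = n * NN k + j"
    have Nx1: "N * x1 = T * D1 + j * f1"
    proof -
      have "N * x1 = n * N * D1 + j * (N * e1)" unfolding xx1 n1 by (simp add: algebra_simps)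
      then have "N * x1 = n * N * D1 + j * (D1 + f1)" unfolding rec1 .
      then show ?thesis unfolding T_def N_def by (simp add: algebra_simps)
    qed
    have Nx2: "N * x2 = T * D2 + j * f2"
    proof -
      have "N * x2 = n * N * D2 + j * (N * e2)" unfolding xx2 n2 by (simp add: algebra_simps)
      then have "N * x2 = n * N * D2 + j * (D2 + f2)" unfolding rec2 .
      then show ?thesis unfolding T_def N_def by (simp add: algebra_simps)
    qed
    have jr: "1 \<le> real_of_int j" "real_of_int j \<le> N" using j1 jN unfolding N_def by simp_all
    have Pb: "0 < j * f1" "j * f1 \<le> 1/16" "0 < j * f2" "j * f2 \<le> 1/16"
    proof -
      show "0 < j * f1" "0 < j * f2" using jr fb by simp_all
      have "j * f1 \<le> N * f1" "j * f2 \<le> N * f2" using jr fb by (auto intro!: mult_right_mono)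
      then show "j * f1 \<le> 1/16" "j * f2 \<le> 1/16" using fN by (auto simp: mult.commute)
    qed
    have sg: "(D1 - D2) * (f1 - f2) < 0"
      using sign_next[of k] unfolding D1_def D2_def f1_def f2_def by simp
    have sgP: "(D1 - D2) * (j * f1 - j * f2) < 0"
    proof -
      have "(D1 - D2) * (j * f1 - j * f2) = j * ((D1 - D2) * (f1 - f2))" by (simp add: algebra_simps)
      moreover have "j * ((D1 - D2) * (f1 - f2)) < 0" using sg jr by (simp add: mult_pos_neg)
      ultimately show ?thesis by linarith
    qed
    have Tneg: "T \<le> -1"
    proof (rule ccontr)
      assume "\<not> T \<le> -1"
      then have T0: "real_of_int T \<ge> 0" by simp
      have "N * x1 > 0" "N * x2 > 0" unfolding Nx1 Nx2 using T0 Dcases Pb by auto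
      then have "x1 > 0" "x2 > 0" using N64' by (simp_all add: zero_less_mult_iff)
      then show False using bad unfolding x1_def x2_def by auto
    qed
    have "T = -1 \<or> T \<le> -2" using Tneg by linarith
    then have tcase: "real_of_int T = -1 \<or> real_of_int T \<le> -2" by auto
    have "gg (D1 + f1) (D2 + f2) \<le> gg (real_of_int T * real_of_int D1 + j * f1) (real_of_int T * real_of_int D2 + j * f2)"
      by (rule ineq0) (use Dcases tcase fb Pb sg sgP in auto)
    then have "gg (N * e1) (N * e2) \<le> gg (N * x1) (N * x2)" unfolding rec1 rec2 Nx1 Nx2 of_int_mult .
    then have "N * G \<le> N * H" unfolding G_def H_def using N64' by (simp add: gg_scale)
    then show ?thesis using N64' unfolding G_def H_def x1_def x2_def e1_def e2_def by simp
  qed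
qed


lemma fstar_eq: "fstar z = gg (fst z) (snd z)"
proof -
  obtain a b where z: "z = (a, b)" by (cases z)
  define M where "M = gg a b"
  have M0: "M \<ge> 0" unfolding M_def gg_def by auto
  have key: "(a / t, b / t) \<in> fstar_ball \<longleftrightarrow> M \<le> t" if t: "t > 0" for t
  proof -
    have e1: "\<bar>a/t + b/t\<bar> = \<bar>a+b\<bar> / t"
      by (simp only: add_divide_distrib[symmetric] abs_divide abs_of_pos[OF t])
    have e2: "\<bar>a/t - b/t\<bar> = \<bar>a-b\<bar> / t"
      by (simp only: diff_divide_distrib[symmetric] abs_divide abs_of_pos[OF t])
    have "(a / t, b / t) \<in> fstar_ball \<longleftrightarrow> \<bar>a+b\<bar> / t \<le> 4 \<and> \<bar>a-b\<bar> / t \<le> 1"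
      unfolding fstar_ball_def e1[symmetric] e2[symmetric] by simp
    also have "\<dots> \<longleftrightarrow> \<bar>a+b\<bar> \<le> 4 * t \<and> \<bar>a-b\<bar> \<le> 1 * t"
      by (simp only: pos_divide_le_eq[OF t])
    also have "\<dots> \<longleftrightarrow> M \<le> t" unfolding M_def gg_def by auto
    finally show ?thesis .
  qed
  have S: "{t. t > 0 \<and> (a / t, b / t) \<in> fstar_ball} = {t. t > 0 \<and> M \<le> t}"
    using key by blast
  show ?thesis
  proof (cases "M = 0")
    case True
    then have "{t. t > 0 \<and> M \<le> t} = {0<..}" by auto
    then show ?thesis using S True unfolding fstar_def minkowski_gauge_def z M_def by simp
  next
    case False
    then have "{t. t > 0 \<and> M \<le> t} = {M..}" using M0 by auto
    then show ?thesis using S unfolding fstar_def minkowski_gauge_def z M_def by simp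
  qed
qed

lemma QQ_ge_self: "QQ k > int k"
proof -
  have "2 ^ k * QQ 0 \<le> QQ (k + 0)" by (rule QQ_ge_pow)
  then have "2 ^ k \<le> QQ k" unfolding QQ_def by simp
  moreover have "int k < 2 ^ k"
    using less_exp[of k] by (metis of_nat_less_iff of_nat_numeral of_nat_power)
  ultimately show ?thesis by linarith
qed

lemma irr: "lim0 d1 \<notin> \<rat>"
proof
  assume "lim0 d1 \<in> \<rat>"
  then obtain r s where s0: "s > 0" and rs: "lim0 d1 = of_int r / of_int s"
    by (auto elim!: Rats_cases')
  define k where "k = nat s"
  define z where "z = QQ k * r - A1 k * s"
  have ez: "ee0 d1 k * s = z"
    unfolding ee0_def z_def rs using s0 by (simp add: field_simps)
  have e0: "ee0 d1 k > 0" using ee_small by auto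
  have "real_of_int z > 0" using ez e0 s0 by (metis of_int_pos mult_pos_pos)
  then have z1: "z \<ge> 1" by simp
  have NNk: "real_of_int (NN k) > 4 * s"
  proof -
    have "QQ k > s" using QQ_ge_self[of k] s0 unfolding k_def by simp
    then have "NN k > 4 * s" using NN_ge[of k] s0 by linarith
    then show ?thesis by linarith
  qed
  have le4: "ee0 d1 k * real_of_int (NN k) \<le> 4" using ee0_le[of d1 k] d_bounds by auto
  have "ee0 d1 k * (4 * s) < ee0 d1 k * real_of_int (NN k)"
    using NNk e0 by (intro mult_strict_left_mono) auto
  then have "4 * (ee0 d1 k * s) < 4" using le4 by (simp add: algebra_simps)
  then have "real_of_int z < 1" using ez by simp
  then show False using z1 by simp
qed

lemma lim0_eq: "lim0 d = ee0 d 0" unfolding ee0_def QQ_def by simp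

lemma best_pos:
  assumes best: "best_sim_approx fstar (lim0 d1, lim0 d2) p a"
  shows "lim0 d1 * p - fst a > 0 \<and> lim0 d2 * p - snd a > 0"
proof (rule ccontr)
  assume badn: "\<not> ?thesis"
  obtain a1 a2 where a: "a = (a1, a2)" by (cases a)
  have bad: "lim0 d1 * p - a1 \<le> 0 \<or> lim0 d2 * p - a2 \<le> 0" using badn a by auto
  have fs: "fstar (approx_vec (lim0 d1, lim0 d2) q (b1, b2)) = gg (lim0 d1 * q - b1) (lim0 d2 * q - b2)" for q b1 b2
    unfolding fstar_eq approx_vec_def by simp
  have p1: "p \<ge> 1" using best unfolding best_sim_approx_def by simp
  show False
  proof (cases "p = 1")
    case True
    have al: "0 < lim0 d1" "lim0 d1 \<le> 1/16" "0 < lim0 d2" "lim0 d2 \<le> 1/16"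
      unfolding lim0_eq using ee_small by auto
    have "a \<noteq> (0, 0)" using bad al True a by auto
    then have "(0, 0) \<noteq> a" by auto
    then have "fstar (approx_vec (lim0 d1, lim0 d2) p (0,0)) > fstar (approx_vec (lim0 d1, lim0 d2) p a)"
      using best unfolding best_sim_approx_def by blast
    then have lt: "gg (lim0 d1) (lim0 d2) > gg (lim0 d1 - a1) (lim0 d2 - a2)"
      unfolding a fs True by simp
    have g1: "gg (lim0 d1) (lim0 d2) \<le> 1/16" unfolding gg_def using al by (auto simp: abs_if max_def)
    have g2: "gg (lim0 d1 - a1) (lim0 d2 - a2) \<ge> 1/4"
    proof (cases "a1 = a2")
      case True
      then have "a1 \<noteq> 0" using \<open>a \<noteq> (0,0)\<close> a by auto
      then have "\<bar>real_of_int a1\<bar> \<ge> 1" by linarith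
      moreover have "\<bar>(lim0 d1 - a1) + (lim0 d2 - a2)\<bar> \<le> 4 * gg (lim0 d1 - a1) (lim0 d2 - a2)"
        by (rule gg_ge)
      ultimately show ?thesis using True al by (auto simp: abs_if split: if_splits)
    next
      case False
      then have "\<bar>real_of_int a1 - real_of_int a2\<bar> \<ge> 1" by linarith
      moreover have "\<bar>(lim0 d1 - a1) - (lim0 d2 - a2)\<bar> \<le> gg (lim0 d1 - a1) (lim0 d2 - a2)"
        by (rule gg_ge)
      ultimately show ?thesis using al by (auto simp: abs_if split: if_splits)
    qed
    show False using lt g1 g2 by linarith
  next
    case False
    then have p2: "p > 1" using p1 by simp
    have ex: "\<exists>m. p \<le> QQ m" using QQ_ge_self[of "nat p"] p1 by (intro exI[of _ "nat p"]) simp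
    define m where "m = (LEAST m. p \<le> QQ m)"
    have pm: "p \<le> QQ m" unfolding m_def using ex by (rule LeastI_ex)
    have m0: "m \<noteq> 0" using pm p2 unfolding QQ_def by (cases m) auto
    then obtain k where mk: "m = Suc k" by (cases m) auto
    have "\<not> p \<le> QQ k" using not_less_Least[of k "\<lambda>m. p \<le> QQ m"] unfolding m_def[symmetric] mk by simp
    then have klo: "QQ k < p" by simp
    have khi: "p \<le> QQ (Suc k)" using pm mk by simp
    have "gg (ee0 d1 k) (ee0 d2 k) \<le> gg (lim0 d1 * p - a1) (lim0 d2 * p - a2)"
      by (rule main[OF klo khi bad])
    moreover have "fstar (approx_vec (lim0 d1, lim0 d2) (QQ k) (A1 k, A2 k)) > fstar (approx_vec (lim0 d1, lim0 d2) p a)"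
      using best klo QQ_pos[of k] unfolding best_sim_approx_def by auto
    then have "gg (lim0 d1 * QQ k - A1 k) (lim0 d2 * QQ k - A2 k) > gg (lim0 d1 * p - a1) (lim0 d2 * p - a2)"
      unfolding a fs .
    moreover have "lim0 d1 * QQ k - A1 k = ee0 d1 k" "lim0 d2 * QQ k - A2 k = ee0 d2 k"
      unfolding ee0_def by (simp_all add: mult.commute)
    ultimately show False by simp
  qed
qed

theorem theorem2p7:
  shows "\<exists>\<alpha> :: real \<times> real. \<not> (fst \<alpha> \<in> \<rat> \<and> snd \<alpha> \<in> \<rat>) \<and>
     (\<forall>p a. best_sim_approx fstar \<alpha> p a \<longrightarrow>
        sgn (fst (approx_vec \<alpha> p a)) = 1 \<and> sgn (snd (approx_vec \<alpha> p a)) = 1)"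
proof (intro exI[of _ "(lim0 d1, lim0 d2)"] conjI allI impI)
  show "\<not> (fst (lim0 d1, lim0 d2) \<in> \<rat> \<and> snd (lim0 d1, lim0 d2) \<in> \<rat>)" using irr by simp
next
  fix p a assume b: "best_sim_approx fstar (lim0 d1, lim0 d2) p a"
  then show "sgn (fst (approx_vec (lim0 d1, lim0 d2) p a)) = 1"
    using best_pos[OF b] unfolding approx_vec_def by simp
  show "sgn (snd (approx_vec (lim0 d1, lim0 d2) p a)) = 1"
    using best_pos[OF b] unfolding approx_vec_def by simp
qed

end
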